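(* A network $N$ of the session calculus is Padovani lock-free if and only if it satisfies $\mathcal{L}(\mathrm{ST})$.
   Context: Session calculus. Fix sets of locations $p,q,r,\dots$, labels $\lambda$ and recursion variables $X,Y$. Threads: $P ::= \mathbf{end} \mid \bigoplus_{i\in I} p_i!\lambda_i;P_i \mid \sum_{i\in I} p_i?\lambda_i;P_i \mid X \mid \mu X.P$, with $I$ finite (nonempty for $\bigoplus$) and expressions $\mu X.X$, $\mu X.\mu Y.P$ excluded. Networks: $N ::= p[\![P]\!] \mid 0 \mid N\parallel N$; in a network all locations are distinct, all threads are closed, and every location named in a send or receive is a location of $N$. Thread states additionally allow the form $\langle q!\lambda\rangle;P$ (an output already selected); network states are built from located thread states likewise, taken modulo the structural congruence $\equiv$ (associativity, commutativity of $\parallel$, $N\parallel 0\equiv N$). $\mathrm{proc}(p,N)$ is the unique thread state $P$ with $N\equiv p[\![P]\!]\parallel N'$. The transition relation is the least relation closed under $\equiv$ containing: (choice) $p[\![\bigoplus_{i\in I}p_i!\lambda_i;P_i]\!]\parallel N \xrightarrow{\tau} p[\![\langle p_k!\lambda_k\rangle;P_k]\!]\parallel N$ for $k\in I$; (unfold) $p[\![\mu X.P]\!]\parallel N\xrightarrow{\tau} p[\![P\{\mu X.P/X\}]\!]\parallel N$; (comm) $p_k[\![\langle q!\lambda_k\rangle;Q]\!]\parallel q[\![\sum_{i\in I}p_i?\lambda_i;P_i]\!]\parallel N \xrightarrow{(p_k,\lambda_k,q)} p_k[\![Q]\!]\parallel q[\![P_k]\!]\parallel N$ for $k\in I$. A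 transition involves the single location moving if it is a $\tau$-transition, and locations $p,q$ if labelled $(p,\lambda,q)$. A path is a network state with a maximal (infinite or ending in a state without outgoing transitions) sequence of transitions. A location $p$ successfully terminates on a path if $\mathrm{proc}(p,N_i)=\mathbf{end}$ for some state $N_i$ on it. Strong fairness of transitions (ST): a transition (source state, label, target state) is enabled in its source state; it is relentlessly enabled on a path if every suffix contains its source. A path $\pi$ is ST-fair if for each suffix $\pi'$, every transition relentlessly enabled on $\pi'$ occurs in $\pi'$. For a fairness assumption $F$, $N$ satisfies $\mathcal{L}(F)$ if for every $F$-fair path $\pi$ from $N$ and every location $p$ of $N$, either $p$ successfully terminates on $\pi$ or $\pi$ contains infinitely many transitions involving $p$. $N$ is Padovani lock-free if for each state $M$ reachable from $N$ and each location $p$ with $\mathrm{proc}(p,M)\neq\mathbf{end}$, there is an execution path from $M$ containing a transition involving $p$. *)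

theory Defs
  imports Main "HOL-Library.Extended_Nat"
begin

text \<open>A finite indexed family (p_i, lambda_i, P_i) for i in I is represented as a list.
  Sel q l P is the thread state with an already selected output.\<close>

datatype ('p, 'l, 'x) thread =
    End
  | Send "('p \<times> 'l \<times> ('p, 'l, 'x) thread) list"
  | Recv "('p \<times> 'l \<times> ('p, 'l, 'x) thread) list"
  | Var 'x
  | Mu 'x "('p, 'l, 'x) thread"
  | Sel 'p 'l "('p, 'l, 'x) thread"

fun fv :: "('p, 'l, 'x) thread \<Rightarrow> 'x set" where
  "fv End = {}"
| "fv (Send xs) = (\<Union>(q, l, P) \<in> set xs. fv P)"
| "fv (Recv xs) = (\<Union>(q, l, P) \<in> set xs. fv P)"
| "fv (Var X) = {X}"
| "fv (Mu X P) = fv P - {X}"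
| "fv (Sel q l P) = fv P"

fun names :: "('p, 'l, 'x) thread \<Rightarrow> 'p set" where
  "names End = {}"
| "names (Send xs) = (\<Union>(q, l, P) \<in> set xs. insert q (names P))"
| "names (Recv xs) = (\<Union>(q, l, P) \<in> set xs. insert q (names P))"
| "names (Var X) = {}"
| "names (Mu X P) = names P"
| "names (Sel q l P) = insert q (names P)"

text \<open>Threads (not general thread states): nonempty internal choices, no selected
  outputs, and the excluded forms mu X. X and mu X. mu Y. P.\<close>
fun wf_thread :: "('p, 'l, 'x) thread \<Rightarrow> bool" where
  "wf_thread End = True"
| "wf_thread (Send xs) = (xs \<noteq> [] \<and> (\<forall>(q, l, P) \<in> set xs. wf_thread P))"
| "wf_thread (Recv xs) = (\<forall>(q, l, P) \<in> set xs. wf_thread P)"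
| "wf_thread (Var X) = True"
| "wf_thread (Mu X P) = (P \<noteq> Var X \<and> (\<forall>Y Q. P \<noteq> Mu Y Q) \<and> wf_thread P)"
| "wf_thread (Sel q l P) = False"

text \<open>Substitution P{Q/X}; only ever used with closed Q, so no capture can occur.\<close>
fun subst :: "'x \<Rightarrow> ('p, 'l, 'x) thread \<Rightarrow> ('p, 'l, 'x) thread \<Rightarrow> ('p, 'l, 'x) thread" where
  "subst X Q End = End"
| "subst X Q (Send xs) = Send (map (\<lambda>(q, l, P). (q, l, subst X Q P)) xs)"
| "subst X Q (Recv xs) = Recv (map (\<lambda>(q, l, P). (q, l, subst X Q P)) xs)"
| "subst X Q (Var Y) = (if X = Y then Q else Var Y)"
| "subst X Q (Mu Y P) = (if X = Y then Mu Y P else Mu Y (subst X Q P))"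
| "subst X Q (Sel q l P) = Sel q l (subst X Q P)"

text \<open>A network state modulo structural congruence is a finite partial map from
  locations to thread states; proc(p,N) = the (N p).\<close>
type_synonym ('p, 'l, 'x) net = "'p \<Rightarrow> ('p, 'l, 'x) thread option"

definition network :: "('p, 'l, 'x) net \<Rightarrow> bool" where
  "network N \<longleftrightarrow> finite (dom N) \<and>
     (\<forall>p P. N p = Some P \<longrightarrow> wf_thread P \<and> fv P = {} \<and> names P \<subseteq> dom N)"

datatype ('p, 'l) label = Tau | Comm 'p 'l 'p

inductive step :: "('p, 'l, 'x) net \<Rightarrow> ('p, 'l) label \<Rightarrow> ('p, 'l, 'x) net \<Rightarrow> bool" where
  choice: "\<lbrakk> N p = Some (Send xs); k < length xs; xs ! k = (q, l, P) \<rbrakk>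
           \<Longrightarrow> step N Tau (N(p \<mapsto> Sel q l P))"
| unfold: "N p = Some (Mu X P) \<Longrightarrow> step N Tau (N(p \<mapsto> subst X (Mu X P) P))"
| comm: "\<lbrakk> p \<noteq> q; N p = Some (Sel q l Q); N q = Some (Recv ys); k < length ys;
           ys ! k = (p, l, P) \<rbrakk>
         \<Longrightarrow> step N (Comm p l q) (N(p \<mapsto> Q, q \<mapsto> P))"

type_synonym ('p, 'l, 'x) transition = "('p, 'l, 'x) net \<times> ('p, 'l) label \<times> ('p, 'l, 'x) net"

fun involves :: "('p, 'l, 'x) transition \<Rightarrow> 'p \<Rightarrow> bool" where
  "involves (N, Tau, M) p = (p \<in> dom N \<and> N p \<noteq> M p)"
| "involves (N, Comm a l b, M) p = (p = a \<or> p = b)"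

text \<open>A path is given by states s, labels a and a length len (\<infinity> for infinite paths);
  its transitions are (s i, a i, s (Suc i)) for i < len; it is maximal.\<close>
definition is_path :: "('p, 'l, 'x) net \<Rightarrow> (nat \<Rightarrow> ('p, 'l, 'x) net) \<Rightarrow> (nat \<Rightarrow> ('p, 'l) label)
    \<Rightarrow> enat \<Rightarrow> bool" where
  "is_path N s a len \<longleftrightarrow> s 0 = N \<and>
     (\<forall>i. enat i < len \<longrightarrow> step (s i) (a i) (s (Suc i))) \<and>
     (\<forall>n. len = enat n \<longrightarrow> \<not> (\<exists>l M. step (s n) l M))"

definition path_trans :: "(nat \<Rightarrow> ('p, 'l, 'x) net) \<Rightarrow> (nat \<Rightarrow> ('p, 'l) label) \<Rightarrow> nat
    \<Rightarrow> ('p, 'l, 'x) transition" where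
  "path_trans s a i = (s i, a i, s (Suc i))"

definition relentless :: "(nat \<Rightarrow> ('p, 'l, 'x) net) \<Rightarrow> enat \<Rightarrow> nat \<Rightarrow> ('p, 'l, 'x) transition \<Rightarrow> bool" where
  "relentless s len j t \<longleftrightarrow>
     (\<forall>k. j \<le> k \<and> enat k \<le> len \<longrightarrow> (\<exists>i. k \<le> i \<and> enat i \<le> len \<and> s i = fst t))"

definition occurs_from :: "(nat \<Rightarrow> ('p, 'l, 'x) net) \<Rightarrow> (nat \<Rightarrow> ('p, 'l) label) \<Rightarrow> enat \<Rightarrow> nat
    \<Rightarrow> ('p, 'l, 'x) transition \<Rightarrow> bool" where
  "occurs_from s a len j t \<longleftrightarrow> (\<exists>i. j \<le> i \<and> enat i < len \<and> path_trans s a i = t)"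

definition ST_fair :: "(nat \<Rightarrow> ('p, 'l, 'x) net) \<Rightarrow> (nat \<Rightarrow> ('p, 'l) label) \<Rightarrow> enat \<Rightarrow> bool" where
  "ST_fair s a len \<longleftrightarrow>
     (\<forall>j t. enat j \<le> len \<longrightarrow> (case t of (M, l, M') \<Rightarrow> step M l M') \<longrightarrow> relentless s len j t
        \<longrightarrow> occurs_from s a len j t)"

definition satisfies_L_ST :: "('p, 'l, 'x) net \<Rightarrow> bool" where
  "satisfies_L_ST N \<longleftrightarrow>
     (\<forall>s a len. is_path N s a len \<longrightarrow> ST_fair s a len \<longrightarrow>
        (\<forall>p \<in> dom N. (\<exists>i. enat i \<le> len \<and> s i p = Some End) \<or>
                      infinite {i. enat i < len \<and> involves (path_trans s a i) p}))"

definition padovani_lock_free :: "('p, 'l, 'x) net \<Rightarrow> bool" where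
  "padovani_lock_free N \<longleftrightarrow>
     (\<forall>M. (\<lambda>A B. \<exists>l. step A l B)\<^sup>*\<^sup>* N M \<longrightarrow>
        (\<forall>p \<in> dom M. M p \<noteq> Some End \<longrightarrow>
           (\<exists>s a len. is_path M s a len \<and> (\<exists>i. enat i < len \<and> involves (path_trans s a i) p))))"

end

theory Submission
  imports Defs "HOL-Library.Countable_Set" "HOL-Library.Nat_Bijection"
begin


inductive tstep :: "('p, 'l, 'x) thread \<Rightarrow> ('p, 'l, 'x) thread \<Rightarrow> bool" where
  ts_send: "(q, l, P) \<in> set xs \<Longrightarrow> tstep (Send xs) (Sel q l P)"
| ts_mu: "tstep (Mu X P) (subst X (Mu X P) P)"
| ts_sel: "tstep (Sel q l Q) Q"
| ts_recv: "(p, l, P) \<in> set ys \<Longrightarrow> tstep (Recv ys) P"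

inductive_cases tstepE: "tstep End R" "tstep (Send xs) R" "tstep (Recv xs) R" "tstep (Var X) R"
  "tstep (Mu X P) R" "tstep (Sel q l P) R"

fun psubst :: "('x \<Rightarrow> ('p, 'l, 'x) thread option) \<Rightarrow> ('p, 'l, 'x) thread \<Rightarrow> ('p, 'l, 'x) thread" where
  "psubst \<sigma> End = End"
| "psubst \<sigma> (Send xs) = Send (map (\<lambda>(q, l, P). (q, l, psubst \<sigma> P)) xs)"
| "psubst \<sigma> (Recv xs) = Recv (map (\<lambda>(q, l, P). (q, l, psubst \<sigma> P)) xs)"
| "psubst \<sigma> (Var Y) = (case \<sigma> Y of Some Q \<Rightarrow> Q | None \<Rightarrow> Var Y)"
| "psubst \<sigma> (Mu Y P) = Mu Y (psubst (\<sigma>(Y := None)) P)"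
| "psubst \<sigma> (Sel q l P) = Sel q l (psubst \<sigma> P)"

fun TT :: "('x \<Rightarrow> ('p, 'l, 'x) thread option) \<Rightarrow> ('p, 'l, 'x) thread \<Rightarrow> ('p, 'l, 'x) thread set" where
  "TT \<sigma> End = {End}"
| "TT \<sigma> (Send xs) = insert (psubst \<sigma> (Send xs))
      (\<Union> (set (map (\<lambda>(q, l, P). insert (Sel q l (psubst \<sigma> P)) (TT \<sigma> P)) xs)))"
| "TT \<sigma> (Recv xs) = insert (psubst \<sigma> (Recv xs)) (\<Union> (set (map (\<lambda>(q, l, P). TT \<sigma> P) xs)))"
| "TT \<sigma> (Var Y) = {psubst \<sigma> (Var Y)}"
| "TT \<sigma> (Mu Y P) = insert (psubst \<sigma> (Mu Y P)) (TT (\<sigma>(Y \<mapsto> psubst \<sigma> (Mu Y P))) P)"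
| "TT \<sigma> (Sel q l P) = insert (psubst \<sigma> (Sel q l P)) (TT \<sigma> P)"

lemma finite_TT: "finite (TT \<sigma> P)"
  by (induction \<sigma> P rule: TT.induct) (simp_all del: fun_upd_apply, auto)

lemma self_TT: "psubst \<sigma> P \<in> TT \<sigma> P"
  by (cases P) auto

lemma fv_psubst: "(\<forall>X Q. \<sigma> X = Some Q \<longrightarrow> fv Q = {}) \<Longrightarrow> fv (psubst \<sigma> P) = fv P - dom \<sigma>"
proof (induction \<sigma> P rule: psubst.induct)
  case (4 \<sigma> Y) then show ?case by (auto split: option.splits)
next
  case (5 \<sigma> Y P)
  have "fv (psubst (\<sigma>(Y := None)) P) = fv P - dom (\<sigma>(Y := None))"
    using 5 by (intro 5(1)) auto
  then show ?case by auto
qed fastforce+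

lemma subst_closed: "X \<notin> fv Q \<Longrightarrow> subst X C Q = Q"
proof (induction X C Q rule: subst.induct)
  case (2 X Q xs) then show ?case by (fastforce intro!: map_idI)
next
  case (3 X Q xs) then show ?case by (fastforce intro!: map_idI)
qed auto

lemma psubst_empty': "\<sigma> = Map.empty \<Longrightarrow> psubst \<sigma> P = P"
proof (induction \<sigma> P rule: psubst.induct)
  case (2 \<sigma> xs) then show ?case by (fastforce intro!: map_idI)
next
  case (3 \<sigma> xs) then show ?case by (fastforce intro!: map_idI)
qed auto

lemma psubst_empty: "psubst Map.empty P = P" by (rule psubst_empty') simp

definition closed_env :: "('x \<Rightarrow> ('p, 'l, 'x) thread option) \<Rightarrow> bool" where
  "closed_env \<sigma> \<longleftrightarrow> (\<forall>X Q. \<sigma> X = Some Q \<longrightarrow> fv Q = {})"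

lemma subst_psubst:
  "closed_env \<sigma> \<Longrightarrow> fv C = {} \<Longrightarrow>
   subst X C (psubst (\<sigma>(X := None)) P) = psubst (\<sigma>(X \<mapsto> C)) P"
proof (induction P arbitrary: \<sigma>)
  case (Var Y)
  then show ?case by (auto simp: closed_env_def subst_closed split: option.splits)
next
  case (Mu Y P)
  show ?case
  proof (cases "X = Y")
    case True then show ?thesis by (simp del: fun_upd_apply)
  next
    case False
    have "closed_env (\<sigma>(Y := None))" using Mu.prems by (auto simp: closed_env_def)
    from Mu.IH[OF this Mu.prems(2)]
    have ih: "subst X C (psubst (\<sigma>(Y := None, X := None)) P) = psubst (\<sigma>(Y := None, X \<mapsto> C)) P" .
    have e1: "\<sigma>(Y := None, X := None) = \<sigma>(X := None, Y := None)"
      using False by (rule fun_upd_twist[symmetric])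
    have e2: "\<sigma>(Y := None, X \<mapsto> C) = \<sigma>(X \<mapsto> C, Y := None)"
      using False by (rule fun_upd_twist[symmetric])
    show ?thesis using ih False unfolding e1 e2 by (simp del: fun_upd_apply)
  qed
qed (fastforce simp: closed_env_def)+

lemma TT_closure:
  "closed_env \<sigma> \<Longrightarrow> fv P \<subseteq> dom \<sigma> \<Longrightarrow>
   (\<forall>X Q R'. \<sigma> X = Some Q \<longrightarrow> tstep Q R' \<longrightarrow> R' \<in> G) \<Longrightarrow> TT \<sigma> P \<subseteq> G \<Longrightarrow>
   R \<in> TT \<sigma> P \<Longrightarrow> tstep R R' \<Longrightarrow> R' \<in> G"
proof (induction \<sigma> P arbitrary: R R' rule: TT.induct)
  case (1 \<sigma>)
  then show ?case by (auto elim: tstepE)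
next
  case (2 \<sigma> xs)
  note C = this
  from C(6) consider "R = psubst \<sigma> (Send xs)"
    | q l P where "(q, l, P) \<in> set xs" "R = Sel q l (psubst \<sigma> P)"
    | q l P where "(q, l, P) \<in> set xs" "R \<in> TT \<sigma> P" by auto
  then show ?case
  proof cases
    case 1
    with C(7) obtain q l P' where R': "R' = Sel q l P'"
      "(q, l, P') \<in> set (map (\<lambda>(q, l, P). (q, l, psubst \<sigma> P)) xs)" by (auto elim: tstepE)
    then obtain P where "(q, l, P) \<in> set xs" "P' = psubst \<sigma> P" by auto
    then have "R' \<in> TT \<sigma> (Send xs)" using R'(1) by force
    then show ?thesis using C(5) by blast
  next
    case (2 q l P)
    with C(7) have "R' = psubst \<sigma> P" by (auto elim: tstepE)
    then have "R' \<in> TT \<sigma> (Send xs)" using 2(1) self_TT[of \<sigma> P] by force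
    then show ?thesis using C(5) by blast
  next
    case (3 q l P)
    show ?thesis
    proof (rule C(1)[OF 3(1) refl refl C(2) _ C(4) _ 3(2) C(7)])
      show "fv P \<subseteq> dom \<sigma>" using C(3) 3(1) by force
      show "TT \<sigma> P \<subseteq> G" using C(5) 3(1) by force
    qed
  qed
next
  case (3 \<sigma> xs)
  note C = this
  from C(6) consider "R = psubst \<sigma> (Recv xs)"
    | q l P where "(q, l, P) \<in> set xs" "R \<in> TT \<sigma> P" by auto
  then show ?case
  proof cases
    case 1
    with C(7) obtain q l P' where R': "R' = P'"
      "(q, l, P') \<in> set (map (\<lambda>(q, l, P). (q, l, psubst \<sigma> P)) xs)" by (auto elim: tstepE)
    then obtain P where "(q, l, P) \<in> set xs" "P' = psubst \<sigma> P" by auto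
    then have "R' \<in> TT \<sigma> (Recv xs)" using R'(1) self_TT[of \<sigma> P] by force
    then show ?thesis using C(5) by blast
  next
    case (2 q l P)
    show ?thesis
    proof (rule C(1)[OF 2(1) refl refl C(2) _ C(4) _ 2(2) C(7)])
      show "fv P \<subseteq> dom \<sigma>" using C(3) 2(1) by force
      show "TT \<sigma> P \<subseteq> G" using C(5) 2(1) by force
    qed
  qed
next
  case (4 \<sigma> Y)
  then show ?case by (auto elim: tstepE split: option.splits)
next
  case (5 \<sigma> Y P)
  let ?M = "psubst \<sigma> (Mu Y P)"
  let ?\<sigma> = "\<sigma>(Y \<mapsto> ?M)"
  have clM: "fv ?M = {}"
    using fv_psubst[of \<sigma> "Mu Y P"] 5(2,3) by (auto simp: closed_env_def)
  have succM: "R' \<in> G" if "tstep ?M R'" for R'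
  proof -
    from that have "R' = subst Y ?M (psubst (\<sigma>(Y := None)) P)"
      by (auto elim: tstepE)
    also have "\<dots> = psubst ?\<sigma> P"
      using subst_psubst[OF 5(2) clM] by simp
    finally show ?thesis using self_TT[of ?\<sigma> P] 5(5) by auto
  qed
  show ?case
  proof (cases "R = ?M")
    case True then show ?thesis using succM 5(7) by simp
  next
    case False
    then have R: "R \<in> TT ?\<sigma> P" using 5(6) by simp
    show ?thesis
    proof (rule 5(1)[OF _ _ _ _ R 5(7)])
      show "closed_env ?\<sigma>" using 5(2) clM by (auto simp: closed_env_def)
      show "fv P \<subseteq> dom ?\<sigma>" using 5(3) by auto
      show "\<forall>X Q R'. ?\<sigma> X = Some Q \<longrightarrow> tstep Q R' \<longrightarrow> R' \<in> G"
        using 5(4) succM by auto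
      show "TT ?\<sigma> P \<subseteq> G" using 5(5) by auto
    qed
  qed
next
  case (6 \<sigma> q l P)
  then show ?case using self_TT[of \<sigma> P] by (auto elim: tstepE)
qed


abbreviation reach :: "('p, 'l, 'x) net \<Rightarrow> ('p, 'l, 'x) net \<Rightarrow> bool" where
  "reach \<equiv> (\<lambda>A B. \<exists>l. step A l B)\<^sup>*\<^sup>*"

lemma step_tstep:
  "step N l M \<Longrightarrow> dom M = dom N \<and> (\<forall>p. M p = N p \<or> (\<exists>A B. N p = Some A \<and> M p = Some B \<and> tstep A B))"
proof (induction rule: step.induct)
  case (choice N p xs k q l P)
  then have "(q, l, P) \<in> set xs" by (metis nth_mem)
  then have "tstep (Send xs) (Sel q l P)" by (rule ts_send)
  with choice show ?case by (auto split: if_splits)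
next
  case (unfold N p X P)
  then show ?case using ts_mu[of X P] by (auto split: if_splits)
next
  case (comm p q N l Q ys k P)
  then have "(p, l, P) \<in> set ys" by (metis nth_mem)
  then have "tstep (Recv ys) P" by (rule ts_recv)
  with comm show ?case using ts_sel by (auto split: if_splits)
qed

lemma step_dom: "step A l B \<Longrightarrow> dom B = dom A"
  using step_tstep by blast

lemma step_End: "step A l B \<Longrightarrow> A p = Some End \<Longrightarrow> B p = Some End"
proof -
  assume st: "step A l B" and e: "A p = Some End"
  have n: "\<not> tstep End R" for R :: "('p, 'l, 'x) thread" by (auto elim: tstepE)
  from step_tstep[OF st] have "B p = A p \<or> (\<exists>X Y. A p = Some X \<and> B p = Some Y \<and> tstep X Y)" by blast
  then show ?thesis using e n by auto
qed

lemma reach_End: "reach A B \<Longrightarrow> A p = Some End \<Longrightarrow> B p = Some End"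
proof (induction rule: rtranclp_induct)
  case (step y z) then show ?case using step_End by metis
qed simp

lemma reach_dom: "reach A B \<Longrightarrow> dom B = dom A"
proof (induction rule: rtranclp_induct)
  case (step y z) then show ?case using step_dom by metis
qed simp

lemma noninv: "step A l B \<Longrightarrow> \<not> involves (A, l, B) p \<Longrightarrow> B p = A p"
proof (induction rule: step.induct)
  case (choice N p' xs k q l P)
  then show ?case by (cases "p = p'") auto
next
  case (unfold N p' X P)
  then show ?case by (cases "p = p'") auto
next
  case (comm p q N l Q ys k P)
  then show ?case by auto
qed

lemma thread_reach: "tstep\<^sup>*\<^sup>* P0 R \<Longrightarrow> fv P0 = {} \<Longrightarrow> R \<in> TT Map.empty P0"
proof (induction rule: rtranclp_induct)
  case base
  then show ?case using self_TT[of Map.empty P0] psubst_empty[of P0] by simp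
next
  case (step y z)
  show ?case
    by (rule TT_closure[of Map.empty P0 "TT Map.empty P0" y z])
       (use step in \<open>auto simp: closed_env_def\<close>)
qed

lemma reach_threads:
  "reach N M \<Longrightarrow> dom M = dom N \<and> (\<forall>p P. N p = Some P \<longrightarrow> (\<exists>R. M p = Some R \<and> tstep\<^sup>*\<^sup>* P R))"
proof (induction rule: rtranclp_induct)
  case base then show ?case by auto
next
  case (step y z)
  then obtain l where st: "step y l z" by auto
  show ?case
  proof (intro conjI allI impI)
    show "dom z = dom N" using step step_dom[OF st] by auto
    fix p P assume "N p = Some P"
    from step.IH \<open>N p = Some P\<close> have "\<exists>R. y p = Some R \<and> tstep\<^sup>*\<^sup>* P R" by blast
    then obtain R where R: "y p = Some R" "tstep\<^sup>*\<^sup>* P R" by blast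
    from step_tstep[OF st] have "z p = y p \<or> (\<exists>A B. y p = Some A \<and> z p = Some B \<and> tstep A B)" by blast
    then show "\<exists>R. z p = Some R \<and> tstep\<^sup>*\<^sup>* P R"
      using R by (auto intro: rtranclp.rtrancl_into_rtrancl)
  qed
qed

lemma finite_reach: assumes "network N" shows "finite {M. reach N M}"
proof -
  let ?B = "\<Union>p\<in>dom N. TT Map.empty (the (N p))"
  have fin: "finite ?B" using assms finite_TT by (auto simp: network_def)
  have "{M. reach N M} \<subseteq> {m. dom m = dom N \<and> ran m \<subseteq> ?B}"
  proof
    fix M assume "M \<in> {M. reach N M}"
    then have r: "reach N M" by simp
    have d: "dom M = dom N" using reach_threads[OF r] by blast
    have "ran M \<subseteq> ?B"
    proof
      fix R assume "R \<in> ran M"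
      then obtain p where p: "M p = Some R" by (auto simp: ran_def)
      then have "p \<in> dom N" using d by blast
      then obtain P where P: "N p = Some P" by auto
      with reach_threads[OF r] p have "tstep\<^sup>*\<^sup>* P R" by fastforce
      moreover have "fv P = {}" using assms P by (auto simp: network_def)
      ultimately have "R \<in> TT Map.empty P" using thread_reach by blast
      then show "R \<in> ?B" using P by force
    qed
    then show "M \<in> {m. dom m = dom N \<and> ran m \<subseteq> ?B}" using d by simp
  qed
  moreover have "finite {m. dom m = dom N \<and> ran m \<subseteq> ?B}"
    using assms fin by (intro finite_set_of_finite_maps) (auto simp: network_def)
  ultimately show ?thesis by (rule finite_subset)
qed

definition labs :: "('p, 'l, 'x) net \<Rightarrow> ('p, 'l) label set" where
  "labs A = insert Tau ((\<lambda>p. case A p of Some (Sel q l Q) \<Rightarrow> Comm p l q | _ \<Rightarrow> Tau) ` dom A)"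

lemma step_labs: "step A l B \<Longrightarrow> l \<in> labs A"
proof (induction rule: step.induct)
  case (comm p q N l Q ys k P)
  then show ?case unfolding labs_def by (intro insertI2 image_eqI[where x = p]) auto
qed (auto simp: labs_def)

lemma finite_labs: "finite (dom A) \<Longrightarrow> finite (labs A)"
  by (simp add: labs_def)



type_synonym ('p, 'l, 'x) plan = "(('p, 'l) label \<times> ('p, 'l, 'x) net) list"
type_synonym ('p, 'l, 'x) cfgt = "('p, 'l, 'x) net \<times> nat \<times> ('p, 'l, 'x) plan"

fun chain :: "('p, 'l, 'x) net \<Rightarrow> ('p, 'l, 'x) plan \<Rightarrow> ('p, 'l, 'x) net \<Rightarrow> bool" where
  "chain S [] T = (S = T)"
| "chain S (x # r) T = (step S (fst x) (snd x) \<and> chain (snd x) r T)"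

fun cst :: "('p, 'l, 'x) net \<Rightarrow> ('p, 'l, 'x) plan \<Rightarrow> nat \<Rightarrow> ('p, 'l, 'x) net" where
  "cst S pl 0 = S"
| "cst S pl (Suc i) = snd (pl ! i)"

lemma chain_append: "chain S (xs @ ys) T \<longleftrightarrow> (\<exists>U. chain S xs U \<and> chain U ys T)"
  by (induction xs arbitrary: S) auto

lemma cst_Cons: "cst S (x # r) (Suc i) = cst (snd x) r i"
  by (cases i) auto

lemma chain_end: "chain S pl T \<Longrightarrow> cst S pl (length pl) = T"
proof (induction pl arbitrary: S)
  case (Cons x r)
  then show ?case using cst_Cons[of S x r "length r"] by simp
qed simp

lemma chain_step: "chain S pl T \<Longrightarrow> i < length pl \<Longrightarrow> step (cst S pl i) (fst (pl ! i)) (snd (pl ! i))"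
proof (induction pl arbitrary: S i)
  case (Cons x r)
  show ?case
  proof (cases i)
    case 0 then show ?thesis using Cons by simp
  next
    case (Suc j)
    then have "step (cst (snd x) r j) (fst (r ! j)) (snd (r ! j))" using Cons by simp
    then show ?thesis using Suc cst_Cons[of S x r j] by simp
  qed
qed simp

lemma cst_append: "i \<le> length xs \<Longrightarrow> cst S (xs @ ys) i = cst S xs i"
  by (cases i) (auto simp: nth_append)

lemma reach_chain: "reach S T \<Longrightarrow> \<exists>pl. chain S pl T"
proof (induction rule: converse_rtranclp_induct)
  case base
  then show ?case by (metis chain.simps(1))
next
  case (step y z)
  then obtain l pl where "step y l z" "chain z pl T" by blast
  then have "chain y ((l, z) # pl) T" by simp
  then show ?case by blast
qed

lemma chain_reach: "chain S pl T \<Longrightarrow> reach S T"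
proof (induction pl arbitrary: S)
  case (Cons x r)
  then have r: "reach (snd x) T" by auto
  have "(\<lambda>A B. \<exists>l. step A l B) S (snd x)" using Cons by auto
  then show ?case using r by (rule converse_rtranclp_into_rtranclp)
qed simp

definition mkplan :: "(nat \<Rightarrow> ('p, 'l, 'x) transition) \<Rightarrow> nat \<Rightarrow> ('p, 'l, 'x) net \<Rightarrow> ('p, 'l, 'x) plan" where
  "mkplan e n S = (case e n of (A, l, B) \<Rightarrow>
     if step A l B \<and> reach S A then (SOME c. chain S c A) @ [(l, B)]
     else if (\<exists>x. step S (fst x) (snd x)) then [SOME x. step S (fst x) (snd x)] else [])"

lemma mkplan_ok: "\<exists>T. chain S (mkplan e n S) T"
proof (cases "e n")
  case (fields A l B)
  show ?thesis
  proof (cases "step A l B \<and> reach S A")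
    case True
    then obtain c where "chain S c A" using reach_chain by blast
    then have "chain S (SOME c. chain S c A) A" by (rule someI)
    then have "chain S ((SOME c. chain S c A) @ [(l, B)]) B" using True by (auto simp: chain_append)
    then show ?thesis using True fields by (auto simp: mkplan_def)
  next
    case False
    show ?thesis
    proof (cases "\<exists>x. step S (fst x) (snd x)")
      case True
      then have "step S (fst (SOME x. step S (fst x) (snd x))) (snd (SOME x. step S (fst x) (snd x)))"
        by (rule someI_ex)
      then show ?thesis using True False fields by (auto simp: mkplan_def)
    next
      case F2: False
      then show ?thesis using False fields by (auto simp: mkplan_def)
    qed
  qed
qed

lemma mkplan_nil: "mkplan e n S = [] \<Longrightarrow> \<not> (\<exists>x. step S (fst x) (snd x))"
  by (cases "e n") (auto simp: mkplan_def split: if_splits)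

lemma mkplan_target:
  assumes "e n = (A, l, B)" "step A l B" "reach S A"
  shows "\<exists>c. mkplan e n S = c @ [(l, B)] \<and> chain S c A"
proof -
  obtain c where "chain S c A" using reach_chain assms(3) by blast
  then have "chain S (SOME c. chain S c A) A" by (rule someI)
  then show ?thesis using assms by (auto simp: mkplan_def)
qed

fun nxt :: "(nat \<Rightarrow> ('p, 'l, 'x) transition) \<Rightarrow> ('p, 'l, 'x) cfgt \<Rightarrow> ('p, 'l, 'x) cfgt" where
  "nxt e (S, n, []) = (S, n, [])"
| "nxt e (S, n, x # r) = (if r = [] then (snd x, Suc n, mkplan e n (snd x)) else (snd x, n, r))"

primrec cfg :: "(nat \<Rightarrow> ('p, 'l, 'x) transition) \<Rightarrow> ('p, 'l, 'x) cfgt \<Rightarrow> nat \<Rightarrow> ('p, 'l, 'x) cfgt" where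
  "cfg e c0 0 = c0"
| "cfg e c0 (Suc i) = nxt e (cfg e c0 i)"

definition cinv :: "('p, 'l, 'x) cfgt \<Rightarrow> bool" where
  "cinv c = (case c of (S, n, pl) \<Rightarrow> (pl = [] \<longrightarrow> \<not> (\<exists>x. step S (fst x) (snd x))) \<and> (\<exists>T. chain S pl T))"

lemma cinv_nxt: "cinv c \<Longrightarrow> cinv (nxt e c)"
proof -
  assume ci: "cinv c"
  obtain S n pl where c: "c = (S, n, pl)" by (cases c) auto
  show ?thesis
  proof (cases pl)
    case Nil then show ?thesis using ci c by simp
  next
    case (Cons x r)
    with ci c obtain T where "step S (fst x) (snd x)" "chain (snd x) r T" by (auto simp: cinv_def)
    then show ?thesis using c Cons mkplan_ok[of "snd x" e n] mkplan_nil[of e n "snd x"]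
      by (cases r) (auto simp: cinv_def)
  qed
qed

locale fairc =
  fixes e :: "nat \<Rightarrow> ('p, 'l, 'x) transition" and c0 :: "('p, 'l, 'x) cfgt"
  assumes inv0: "cinv c0"
begin

definition "s i = fst (cfg e c0 i)"
definition "pl i = snd (snd (cfg e c0 i))"
definition "ctr i = fst (snd (cfg e c0 i))"
definition "a i = fst (hd (pl i))"
definition "len = (if \<exists>i. pl i = [] then enat (LEAST i. pl i = []) else \<infinity>)"

lemma cfg_eq: "cfg e c0 i = (s i, ctr i, pl i)"
  by (simp add: s_def ctr_def pl_def)

lemma inv_cfg: "cinv (cfg e c0 i)"
  by (induction i) (auto simp: inv0 cinv_nxt)

lemma stuck_abs: "pl i = [] \<Longrightarrow> cfg e c0 (Suc i) = cfg e c0 i"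
  using cfg_eq[of i] by simp

lemma stuck_abs2: "pl i = [] \<Longrightarrow> i \<le> j \<Longrightarrow> cfg e c0 j = cfg e c0 i"
proof (induction j)
  case 0 then show ?case by simp
next
  case (Suc j)
  then show ?case
  proof (cases "i \<le> j")
    case True
    with Suc have "cfg e c0 j = cfg e c0 i" by simp
    then have "pl j = []" using Suc(2) by (simp add: pl_def)
    then show ?thesis using stuck_abs[of j] \<open>cfg e c0 j = cfg e c0 i\<close> by simp
  next
    case False then have "i = Suc j" using Suc by simp
    then show ?thesis by simp
  qed
qed

lemma nonstuck_step: "pl i \<noteq> [] \<Longrightarrow> step (s i) (a i) (s (Suc i))"
proof -
  assume ne: "pl i \<noteq> []"
  then obtain x r where x: "pl i = x # r" by (cases "pl i") auto
  have "cinv (s i, ctr i, pl i)" using inv_cfg[of i] cfg_eq[of i] by simp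
  then have "step (s i) (fst x) (snd x)" using x by (auto simp: cinv_def)
  moreover have "s (Suc i) = snd x"
  proof -
    have c: "cfg e c0 (Suc i) = nxt e (s i, ctr i, x # r)" by (simp only: cfg.simps cfg_eq x)
    show ?thesis unfolding s_def c by (cases "r = []") simp_all
  qed
  ultimately show ?thesis using x by (simp add: a_def)
qed

lemma stuck_nostep: "pl i = [] \<Longrightarrow> \<not> step (s i) l M"
proof -
  assume "pl i = []"
  moreover have "cinv (s i, ctr i, pl i)" using inv_cfg[of i] cfg_eq[of i] by simp
  ultimately show ?thesis by (auto simp: cinv_def)
qed

lemma lt_len: "pl i \<noteq> [] \<Longrightarrow> enat i < len"
proof -
  assume ne: "pl i \<noteq> []"
  show ?thesis
  proof (cases "\<exists>i. pl i = []")
    case True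
    let ?m = "LEAST i. pl i = []"
    have pm: "pl ?m = []" using True by (rule LeastI_ex)
    have "i < ?m"
    proof (rule ccontr)
      assume "\<not> i < ?m"
      then have "?m \<le> i" by simp
      then have "cfg e c0 i = cfg e c0 ?m" by (rule stuck_abs2[OF pm])
      then show False using ne pm by (simp add: pl_def)
    qed
    then show ?thesis using True by (simp add: len_def)
  next
    case False then show ?thesis by (simp add: len_def)
  qed
qed

lemma len_lt: "enat i < len \<Longrightarrow> pl i \<noteq> []"
proof
  assume "enat i < len" "pl i = []"
  then have ex: "\<exists>i. pl i = []" by blast
  then have "enat i < enat (LEAST i. pl i = [])" using \<open>enat i < len\<close> by (simp add: len_def)
  then show False using not_less_Least[of i "\<lambda>i. pl i = []"] \<open>pl i = []\<close> by simp
qed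

lemma len_fin: "len = enat m \<Longrightarrow> pl m = []"
proof -
  assume l: "len = enat m"
  then have ex: "\<exists>i. pl i = []" by (auto simp: len_def split: if_splits)
  then have "m = (LEAST i. pl i = [])" using l by (simp add: len_def)
  then show ?thesis using LeastI_ex[OF ex] by simp
qed

lemma is_path_s: "is_path (fst c0) s a len"
  unfolding is_path_def
proof (intro conjI allI impI)
  show "s 0 = fst c0" by (simp add: s_def)
  fix i assume "enat i < len"
  then show "step (s i) (a i) (s (Suc i))" using len_lt nonstuck_step by blast
next
  fix n assume "len = enat n"
  then show "\<not> (\<exists>l M. step (s n) l M)" using len_fin stuck_nostep by blast
qed

lemma reach_suc: "reach (s i) (s (Suc i))"
proof (cases "pl i = []")
  case True then show ?thesis using stuck_abs[of i] by (simp add: s_def)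
next
  case False then show ?thesis using nonstuck_step[of i] by blast
qed

lemma reach_s: "i \<le> j \<Longrightarrow> reach (s i) (s j)"
proof (induction j)
  case 0 then show ?case by simp
next
  case (Suc j)
  show ?case
  proof (cases "i \<le> j")
    case True
    then show ?thesis using Suc reach_suc[of j] by (meson rtranclp_trans)
  next
    case False then have "i = Suc j" using Suc by simp
    then show ?thesis by simp
  qed
qed

lemma follow_aux:
  assumes c: "cfg e c0 i = (S, n, p)" and ne: "p \<noteq> []"
  shows "k < length p \<Longrightarrow> cfg e c0 (i + k) = (cst S p k, n, drop k p)"
proof (induction k)
  case 0 then show ?case using c by simp
next
  case (Suc k)
  then have IH: "cfg e c0 (i + k) = (cst S p k, n, drop k p)" by simp
  have d: "drop k p = p ! k # drop (Suc k) p" using Suc by (simp add: Cons_nth_drop_Suc)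
  have "drop (Suc k) p \<noteq> []" using Suc by simp
  then show ?case using IH d by simp
qed

lemma follow:
  assumes c: "cfg e c0 i = (S, n, p)" and ne: "p \<noteq> []"
  shows "\<forall>k < length p. a (i + k) = fst (p ! k) \<and> enat (i + k) < len"
    and "\<forall>k \<le> length p. s (i + k) = cst S p k"
    and "cfg e c0 (i + length p) = (cst S p (length p), Suc n, mkplan e n (cst S p (length p)))"
proof -
  have last: "cfg e c0 (i + length p) = (cst S p (length p), Suc n, mkplan e n (cst S p (length p)))"
  proof -
    obtain k where k: "length p = Suc k" using ne by (cases p) auto
    then have "cfg e c0 (i + k) = (cst S p k, n, drop k p)" using follow_aux[OF c ne] by simp
    moreover have "drop k p = [p ! k]" using k by (metis Cons_nth_drop_Suc drop_all le_refl lessI)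
    ultimately show ?thesis using k by simp
  qed
  show "cfg e c0 (i + length p) = (cst S p (length p), Suc n, mkplan e n (cst S p (length p)))"
    by (rule last)
  show "\<forall>k < length p. a (i + k) = fst (p ! k) \<and> enat (i + k) < len"
  proof (intro allI impI)
    fix k assume k: "k < length p"
    then have cf: "cfg e c0 (i + k) = (cst S p k, n, drop k p)" using follow_aux[OF c ne] by simp
    then have "pl (i + k) = drop k p" by (simp add: pl_def)
    then show "a (i + k) = fst (p ! k) \<and> enat (i + k) < len"
      using k lt_len[of "i + k"] by (simp add: a_def hd_drop_conv_nth)
  qed
  show "\<forall>k \<le> length p. s (i + k) = cst S p k"
  proof (intro allI impI)
    fix k assume k: "k \<le> length p"
    show "s (i + k) = cst S p k"
    proof (cases "k = length p")
      case True then show ?thesis using last by (simp add: s_def)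
    next
      case False then show ?thesis using follow_aux[OF c ne, of k] k by (simp add: s_def)
    qed
  qed
qed

lemma ctr_step: "ctr (Suc i) = ctr i \<or> (ctr (Suc i) = Suc (ctr i) \<and> cfg e c0 (Suc i) = (s (Suc i), Suc (ctr i), mkplan e (ctr i) (s (Suc i))))"
proof -
  have c: "cfg e c0 (Suc i) = nxt e (s i, ctr i, pl i)" using cfg_eq[of i] by simp
  show ?thesis
  proof (cases "pl i")
    case Nil then show ?thesis using c by (simp add: ctr_def)
  next
    case (Cons x r)
    then show ?thesis using c by (cases "r = []") (auto simp: ctr_def s_def)
  qed
qed

lemma ctr_mono: "i \<le> j \<Longrightarrow> ctr i \<le> ctr j"
proof (induction j)
  case 0 then show ?case by simp
next
  case (Suc j)
  then show ?case using ctr_step[of j] by (cases "i \<le> j") (auto simp: le_Suc_eq)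
qed

lemma unbounded: assumes "len = \<infinity>" shows "\<exists>i. m \<le> ctr i"
proof (induction m)
  case 0 then show ?case by simp
next
  case (Suc m)
  then obtain i where i: "m \<le> ctr i" by blast
  have ne: "pl i \<noteq> []"
  proof
    assume "pl i = []"
    then have "\<exists>i. pl i = []" by blast
    then show False using assms by (simp add: len_def)
  qed
  have "cfg e c0 i = (s i, ctr i, pl i)" by (rule cfg_eq)
  from follow(3)[OF this ne] have "ctr (i + length (pl i)) = Suc (ctr i)" by (simp add: ctr_def)
  then show ?case using i by (metis Suc_le_mono)
qed

lemma load:
  assumes "len = \<infinity>" "ctr j < Suc n"
  shows "\<exists>i > j. cfg e c0 i = (s i, Suc n, mkplan e n (s i))"
proof -
  have ex: "\<exists>i. Suc n \<le> ctr i" using unbounded[OF assms(1)] by blast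
  let ?i = "LEAST i. Suc n \<le> ctr i"
  have ci: "Suc n \<le> ctr ?i" using ex by (rule LeastI_ex)
  have gt: "j < ?i"
  proof (rule ccontr)
    assume "\<not> j < ?i"
    then have "ctr ?i \<le> ctr j" using ctr_mono by simp
    then show False using ci assms(2) by simp
  qed
  then obtain i' where i': "?i = Suc i'" by (cases ?i) auto
  have "\<not> Suc n \<le> ctr i'" using not_less_Least[of i' "\<lambda>i. Suc n \<le> ctr i"] i' by simp
  then have "ctr (Suc i') = Suc (ctr i') \<and> cfg e c0 (Suc i') = (s (Suc i'), Suc (ctr i'), mkplan e (ctr i') (s (Suc i')))"
    using ctr_step[of i'] ci i' by auto
  moreover have "ctr i' = n" using calculation ci i' \<open>\<not> Suc n \<le> ctr i'\<close> by simp
  ultimately show ?thesis using gt i' by (intro exI[of _ "Suc i'"]) auto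
qed

lemma fair:
  assumes cov: "\<And>t m. t \<in> {(A, l, B). reach (fst c0) A \<and> step A l B} \<Longrightarrow> \<exists>n\<ge>m. e n = t"
  shows "ST_fair s a len"
  unfolding ST_fair_def
proof (intro allI impI)
  fix j t
  assume jl: "enat j \<le> len" and st: "case t of (M, l, M') \<Rightarrow> step M l M'" and rel: "relentless s len j t"
  obtain A l B where t: "t = (A, l, B)" by (cases t) auto
  have stA: "step A l B" using st t by simp
  show "occurs_from s a len j t"
  proof (cases len)
    case (enat m)
    then have "j \<le> m" using jl by simp
    with rel enat obtain i where "m \<le> i" "i \<le> m" "s i = A" unfolding relentless_def using t by fastforce
    then have "s m = A" by simp
    moreover have "pl m = []" using enat len_fin by simp
    ultimately show ?thesis using stuck_nostep stA by blast
  next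
    case infinity
    from rel obtain i0 where "j \<le> i0" "s i0 = A" unfolding relentless_def using t infinity by fastforce
    then have "reach (fst c0) A" using reach_s[of 0 i0] by (simp add: s_def)
    then have "t \<in> {(A, l, B). reach (fst c0) A \<and> step A l B}" using t stA by simp
    then obtain n where n: "Suc (ctr j) \<le> n" "e n = t" using cov by blast
    then obtain i where i: "i > j" "cfg e c0 i = (s i, Suc n, mkplan e n (s i))"
      using load[OF infinity, of j n] by auto
    from rel i(1) infinity have "\<exists>i'\<ge>i. enat i' \<le> len \<and> s i' = fst t" unfolding relentless_def by simp
    then obtain i' where "i \<le> i'" "s i' = A" using t by auto
    then have "reach (s i) A" using reach_s by metis
    then obtain c where c: "mkplan e n (s i) = c @ [(l, B)]" "chain (s i) c A"
      using mkplan_target[of e n A l B "s i"] n t stA by auto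
    let ?p = "c @ [(l, B)]"
    have cf: "cfg e c0 i = (s i, Suc n, ?p)" using i c by simp
    note F = follow[OF cf]
    have "a (i + length c) = l \<and> enat (i + length c) < len" using F(1) by (simp add: nth_append)
    moreover have "s (i + length c) = A"
      using F(2) cst_append[of "length c" c "s i" "[(l, B)]"] chain_end[OF c(2)] by simp
    moreover have "s (Suc (i + length c)) = B"
    proof -
      have "s (i + Suc (length c)) = cst (s i) ?p (Suc (length c))" using F(2)[rule_format, of "Suc (length c)"] by simp
      then show ?thesis by (simp add: nth_append)
    qed
    ultimately have "path_trans s a (i + length c) = t" "enat (i + length c) < len"
      using t by (auto simp: path_trans_def)
    then show ?thesis unfolding occurs_from_def using i(1) by (intro exI[of _ "i + length c"]) auto
  qed
qed

end



lemma reach_step: "reach A B \<Longrightarrow> step B l C \<Longrightarrow> reach A C"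
proof -
  assume r: "reach A B" and st: "step B l C"
  from st have "(\<lambda>A B. \<exists>l. step A l B) B C" by blast
  with r show ?thesis by (rule rtranclp.rtrancl_into_rtrancl[of "\<lambda>A B. \<exists>l. step A l B" A B C])
qed

lemma fair_path_exists:
  assumes fin: "finite {A. reach S0 A}" and fd: "finite (dom S0)" and ch: "chain S0 p T"
  shows "\<exists>s a len. is_path S0 s a len \<and> ST_fair s a len \<and>
           (\<forall>k < length p. enat k < len \<and> a k = fst (p ! k)) \<and>
           (\<forall>k \<le> length p. s k = cst S0 p k) \<and> (\<forall>i j. i \<le> j \<longrightarrow> reach (s i) (s j))"
proof -
  define Tr where "Tr = {(A, l, B). reach S0 A \<and> step A l B}"
  let ?R = "{A. reach S0 A}"
  have sub: "Tr \<subseteq> (\<Union>A\<in>?R. \<Union>l\<in>labs A. \<Union>B\<in>?R. {(A, l, B)})"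
  proof
    fix t assume "t \<in> Tr"
    then obtain A l B where t: "t = (A, l, B)" "reach S0 A" "step A l B" by (auto simp: Tr_def)
    from t(2) t(3) have "reach S0 B" by (rule reach_step)
    moreover have "l \<in> labs A" using t step_labs by blast
    ultimately show "t \<in> (\<Union>A\<in>?R. \<Union>l\<in>labs A. \<Union>B\<in>?R. {(A, l, B)})" using t by blast
  qed
  have "finite (\<Union>A\<in>?R. \<Union>l\<in>labs A. \<Union>B\<in>?R. {(A, l, B)})"
  proof (intro finite_UN_I fin)
    fix A assume "A \<in> ?R"
    then have "dom A = dom S0" using reach_dom by blast
    then show "finite (labs A)" using fd finite_labs by metis
  qed simp
  then have "finite Tr" using sub finite_subset by blast
  then have cnt: "countable Tr" by (rule countable_finite)
  define e where "e n = from_nat_into Tr (fst (prod_decode n))" for n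
  have cov: "\<exists>n\<ge>m. e n = t" if tT: "t \<in> Tr" for t m
  proof -
    obtain k where k: "from_nat_into Tr k = t" using from_nat_into_surj[OF cnt tT] by blast
    have "e (prod_encode (k, m)) = t" using k by (simp add: e_def)
    moreover have "m \<le> prod_encode (k, m)" by (rule le_prod_encode_2)
    ultimately show ?thesis by blast
  qed
  define c0 where "c0 = (if p = [] then (S0, 0::nat, mkplan e 0 S0) else (S0, 0::nat, p))"
  have inv: "cinv c0"
  proof (cases "p = []")
    case True then show ?thesis using mkplan_ok[of S0 e 0] mkplan_nil[of e 0 S0]
      by (auto simp: c0_def cinv_def)
  next
    case False then show ?thesis using ch by (auto simp: c0_def cinv_def)
  qed
  interpret F: fairc e c0 by (rule fairc.intro[OF inv])
  have fst0: "fst c0 = S0" by (simp add: c0_def)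
  have P1: "is_path S0 F.s F.a F.len" using F.is_path_s fst0 by simp
  have P2: "ST_fair F.s F.a F.len"
    by (rule F.fair) (use cov in \<open>auto simp: Tr_def fst0\<close>)
  have P3: "\<forall>k < length p. enat k < F.len \<and> F.a k = fst (p ! k)"
  proof (cases "p = []")
    case True then show ?thesis by simp
  next
    case False
    then have "cfg e c0 0 = (S0, 0, p)" by (simp add: c0_def)
    from F.follow(1)[OF this False] show ?thesis by simp
  qed
  have P4: "\<forall>k \<le> length p. F.s k = cst S0 p k"
  proof (cases "p = []")
    case True
    have "F.s 0 = S0" unfolding F.s_def using fst0 by simp
    then show ?thesis using True by simp
  next
    case False
    then have "cfg e c0 0 = (S0, 0, p)" by (simp add: c0_def)
    from F.follow(2)[OF this False] show ?thesis by simp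
  qed
  show ?thesis using P1 P2 P3 P4 F.reach_s by blast
qed

lemma path_reach: "is_path N s a len \<Longrightarrow> enat i \<le> len \<Longrightarrow> reach N (s i)"
proof (induction i)
  case 0 then show ?case by (simp add: is_path_def)
next
  case (Suc i)
  then have lt: "enat i < len" by (simp add: Suc_ile_eq)
  then have "reach N (s i)" using Suc by (simp add: order_less_imp_le)
  moreover have "step (s i) (a i) (s (Suc i))" using Suc(2) lt by (simp add: is_path_def)
  ultimately show ?case by (rule reach_step)
qed

theorem mainTheorem7:
  fixes N :: "('p, 'l, 'x) net"
  assumes "network N"
  shows "padovani_lock_free N \<longleftrightarrow> satisfies_L_ST N"
proof
  have finN: "finite {A. reach N A}" using finite_reach[OF assms] .
  have fdN: "finite (dom N)" using assms by (simp add: network_def)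
  {
    assume LF: "padovani_lock_free N"
    show "satisfies_L_ST N"
      unfolding satisfies_L_ST_def
    proof (intro allI impI ballI)
      fix s a len p
      assume path: "is_path N s a len" and fair: "ST_fair s a len" and pN: "p \<in> dom N"
      show "(\<exists>i. enat i \<le> len \<and> s i p = Some End) \<or> infinite {i. enat i < len \<and> involves (path_trans s a i) p}"
      proof (rule ccontr)
        assume "\<not> ?thesis"
        then have noEnd: "\<And>i. enat i \<le> len \<Longrightarrow> s i p \<noteq> Some End"
          and finI: "finite {i. enat i < len \<and> involves (path_trans s a i) p}" by auto
        have LF': "\<exists>s' a' len'. is_path M s' a' len' \<and> (\<exists>i. enat i < len' \<and> involves (path_trans s' a' i) p)"
          if "reach N M" "M p \<noteq> Some End" for M
        proof -
          have "p \<in> dom M" using reach_dom[OF that(1)] pN by simp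
          then show ?thesis using LF that unfolding padovani_lock_free_def by blast
        qed
        show False
        proof (cases len)
          case (enat m)
          have r: "reach N (s m)" using path_reach[OF path] enat by simp
          have "s m p \<noteq> Some End" using noEnd enat by simp
          from LF'[OF r this] obtain s' a' len' i where
            P: "is_path (s m) s' a' len'" "enat i < len'" by blast
          then have "enat 0 < len'" by (metis i0_less le_less_trans zero_enat_def zero_le)
          then have "step (s' 0) (a' 0) (s' (Suc 0))" using P(1) unfolding is_path_def by blast
          moreover have "s' 0 = s m" using P(1) by (simp add: is_path_def)
          ultimately show False using path enat by (auto simp: is_path_def)
        next
          case infinity
          from finI obtain K where K: "\<And>i. i \<in> {i. enat i < len \<and> involves (path_trans s a i) p} \<Longrightarrow> i < K"
            by (metis finite_nat_set_iff_bounded mem_Collect_eq)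
          have noinvK: "\<not> involves (path_trans s a i) p" if "K \<le> i" for i
            using K[of i] that infinity by auto
          have "s ` {K..} \<subseteq> {A. reach N A}" using path_reach[OF path] infinity by auto
          then have "finite (s ` {K..})" using finN finite_subset by blast
          from inf_img_fin_dom[OF this infinite_Ici]
          obtain S where S: "S \<in> s ` {K..}" "infinite (s -` {S})" by blast
          obtain i1 where i1: "K \<le> i1" "s i1 = S" using S(1) by auto
          have ioS: "\<forall>k. \<exists>i\<ge>k. s i = S" using S(2) by (simp add: infinite_nat_iff_unbounded_le)
          have rS: "reach N S" using path_reach[OF path, of i1] infinity i1 by simp
          have "S p \<noteq> Some End" using noEnd[of i1] i1 infinity by simp
          from LF'[OF rS this] obtain s' a' len' i0 where
            P: "is_path S s' a' len'" "enat i0 < len'" "involves (path_trans s' a' i0) p" by blast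
          have occ: "\<exists>i\<ge>k. path_trans s a i = path_trans s' a' m"
            if io: "\<forall>k. \<exists>i\<ge>k. s i = s' m" and m: "m \<le> i0" for m k
          proof -
            have "enat m < len'" using m P(2) by (meson enat_ord_simps(1) le_less_trans)
            then have st: "step (s' m) (a' m) (s' (Suc m))" using P(1) by (simp add: is_path_def)
            have rel: "relentless s len k (path_trans s' a' m)"
              unfolding relentless_def path_trans_def using io infinity by auto
            have "occurs_from s a len k (path_trans s' a' m)"
              using fair rel st infinity unfolding ST_fair_def by (auto simp: path_trans_def)
            then show ?thesis unfolding occurs_from_def by blast
          qed
          have io: "\<forall>k. \<exists>i\<ge>k. s i = s' m" if "m \<le> i0" for m
            using that
          proof (induction m)
            case 0 then show ?case using ioS P(1) by (simp add: is_path_def)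
          next
            case (Suc m)
            then have IH: "\<forall>k. \<exists>i\<ge>k. s i = s' m" by simp
            show ?case
            proof
              fix k
              obtain i where "i \<ge> k" "path_trans s a i = path_trans s' a' m"
                using occ[OF IH] Suc(2) by fastforce
              then show "\<exists>i\<ge>k. s i = s' (Suc m)" by (intro exI[of _ "Suc i"]) (auto simp: path_trans_def)
            qed
          qed
          obtain i where "i \<ge> K" "path_trans s a i = path_trans s' a' i0"
            using occ[OF io[OF le_refl] le_refl] by blast
          then show False using noinvK P(3) by metis
        qed
      qed
    qed
  }
  {
    assume L: "satisfies_L_ST N"
    show "padovani_lock_free N"
      unfolding padovani_lock_free_def
    proof (intro allI impI ballI)
      fix M p
      assume rM: "reach N M" and pM: "p \<in> dom M" and ne: "M p \<noteq> Some End"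
      show "\<exists>s a len. is_path M s a len \<and> (\<exists>i. enat i < len \<and> involves (path_trans s a i) p)"
      proof (rule ccontr)
        assume nopath: "\<not> ?thesis"
        have "{A. reach M A} \<subseteq> {A. reach N A}"
        proof
          fix A assume "A \<in> {A. reach M A}"
          then have "reach M A" by simp
          with rM have "reach N A" by (rule rtranclp_trans)
          then show "A \<in> {A. reach N A}" by simp
        qed
        then have finM: "finite {A. reach M A}" using finN by (rule finite_subset)
        have dM: "dom M = dom N" using reach_dom[OF rM] .
        have fdM: "finite (dom M)" using dM fdN by simp
        have noinv: "\<not> involves (A, l, B) p" if rA: "reach M A" and sA: "step A l B" for A l B
        proof
          assume inv: "involves (A, l, B) p"
          obtain c where c: "chain M c A" using reach_chain[OF rA] by blast
          let ?p = "c @ [(l, B)]"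
          have "chain M ?p B" using c sA by (auto simp: chain_append)
          from fair_path_exists[OF finM fdM this] obtain s a len where
            Q: "is_path M s a len" "\<forall>k < length ?p. enat k < len \<and> a k = fst (?p ! k)"
               "\<forall>k \<le> length ?p. s k = cst M ?p k" by blast
          have "enat (length c) < len" "a (length c) = l" using Q(2)[rule_format, of "length c"] by simp_all
          moreover have "s (length c) = A"
            using Q(3)[rule_format, of "length c"] cst_append[of "length c" c M "[(l, B)]"] chain_end[OF c] by simp
          moreover have "s (Suc (length c)) = B"
            using Q(3)[rule_format, of "Suc (length c)"] by (simp add: nth_append)
          ultimately show False using nopath Q(1) inv
            by (metis path_trans_def)
        qed
        have keep: "X p = M p" if "reach M X" for X
          using that
        proof (induction rule: rtranclp_induct)
          case base then show ?case by simp
        next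
          case (step y z)
          then obtain l where "step y l z" by blast
          then show ?case using noninv noinv step by metis
        qed
        obtain c where c: "chain N c M" using reach_chain[OF rM] by blast
        from fair_path_exists[OF finN fdN c] obtain s a len where
          Q: "is_path N s a len" "ST_fair s a len" "\<forall>k \<le> length c. s k = cst N c k"
             "\<forall>i j. i \<le> j \<longrightarrow> reach (s i) (s j)" by blast
        have sn: "s (length c) = M" using Q(3) chain_end[OF c] by simp
        have pN: "p \<in> dom N" using pM dM by simp
        from L Q(1,2) pN have
          "(\<exists>i. enat i \<le> len \<and> s i p = Some End) \<or> infinite {i. enat i < len \<and> involves (path_trans s a i) p}"
          unfolding satisfies_L_ST_def by blast
        then show False
        proof
          assume "\<exists>i. enat i \<le> len \<and> s i p = Some End"
          then obtain i where i: "s i p = Some End" by blast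
          show False
          proof (cases "i \<le> length c")
            case True
            then have "reach (s i) M" using Q(4) sn by metis
            then show False using reach_End i ne by metis
          next
            case False
            then have "reach M (s i)" using Q(4) sn by (metis nat_le_linear)
            then show False using keep i ne by metis
          qed
        next
          assume inf: "infinite {i. enat i < len \<and> involves (path_trans s a i) p}"
          have "{i. enat i < len \<and> involves (path_trans s a i) p} \<subseteq> {..<length c}"
          proof
            fix i assume i: "i \<in> {i. enat i < len \<and> involves (path_trans s a i) p}"
            show "i \<in> {..<length c}"
            proof (rule ccontr)
              assume "i \<notin> {..<length c}"
              then have "reach M (s i)" using Q(4) sn by (metis lessThan_iff not_le_imp_less order_less_imp_le)
              moreover have "step (s i) (a i) (s (Suc i))" using i Q(1) by (simp add: is_path_def)
              ultimately show False using noinv i by (simp add: path_trans_def)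
            qed
          qed
          then show False using inf finite_subset by blast
        qed
      qed
    qed
  }
qed

end
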